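(* Let $N\ge 1$, $B\in\mathbb{R}$, and for $i=1,\dots,N$ let $D_i>0$, $b_i>0$, $a_i\in\mathbb{R}$. For $q\in(0,1)$ define $c_i(q):=-\dfrac{a_i}{b_i}-\dfrac{1}{b_i}\big[\ln(1-q)-\ln q\big]$, and for $\bm q=(q_1,\dots,q_N)\in(0,1)^N$ define $$g(\bm q):=\sum_{i=1}^N D_i q_i\,c_i(q_i)-B.$$ Then $g$ is strongly convex on $(0,1)^N$.
   Context: $c_i(q)$ is the inverse of the logit market-share function $q_i(c)=1/(1+\exp\{-(a_i+b_ic)\})$, mapping a market share $q$ to the marketing cost achieving it; $g$ is the budget-constraint function (total cost minus budget $B$). *)

theory Defs
  imports "HOL-Analysis.Analysis"
begin

definition strongly_convex_on :: "'a::real_normed_vector set \<Rightarrow> ('a \<Rightarrow> real) \<Rightarrow> bool" where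
  "strongly_convex_on S f \<longleftrightarrow> convex S \<and> (\<exists>\<mu>>0. \<forall>x\<in>S. \<forall>y\<in>S. \<forall>t\<in>{0..1}.
     f ((1 - t) *\<^sub>R x + t *\<^sub>R y) \<le> (1 - t) * f x + t * f y - \<mu> / 2 * t * (1 - t) * (norm (x - y))\<^sup>2)"

definition cost :: "real \<Rightarrow> real \<Rightarrow> real \<Rightarrow> real" where
  "cost a b q = - a / b - (1 / b) * (ln (1 - q) - ln q)"

text \<open>Budget-constraint function g(q) = sum_i D_i q_i c_i(q_i) - B, indices = the finite type 'n (N = CARD('n)).\<close>
definition gfun :: "('n::finite \<Rightarrow> real) \<Rightarrow> ('n \<Rightarrow> real) \<Rightarrow> ('n \<Rightarrow> real) \<Rightarrow> real \<Rightarrow> real ^ 'n \<Rightarrow> real" where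
  "gfun D a b B q = (\<Sum>i\<in>UNIV. D i * q $ i * cost (a i) (b i) (q $ i)) - B"

definition open_unit_cube :: "(real ^ 'n) set" where
  "open_unit_cube = {q. \<forall>i. 0 < q $ i \<and> q $ i < 1}"

end

theory Submission
  imports Defs
begin

lemma sc1:
  fixes \<phi> \<phi>' \<phi>'' :: "real \<Rightarrow> real"
  assumes d1: "\<And>x. x \<in> {0<..<1} \<Longrightarrow> (\<phi> has_real_derivative \<phi>' x) (at x)"
    and d2: "\<And>x. x \<in> {0<..<1} \<Longrightarrow> (\<phi>' has_real_derivative \<phi>'' x) (at x)"
    and lb: "\<And>x. x \<in> {0<..<1} \<Longrightarrow> \<phi>'' x \<ge> m"
    and x: "x \<in> {0<..<1}" and y: "y \<in> {0<..<1}" and t: "0 \<le> t" "t \<le> 1"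
  shows "\<phi> ((1-t)*x+t*y) \<le> (1-t)*\<phi> x + t*\<phi> y - m/2*t*(1-t)*(x-y)^2"
proof -
  have "convex_on {0<..<1} (\<lambda>x. \<phi> x - m/2*x^2)"
  proof (rule f''_ge0_imp_convex[where f'="\<lambda>x. \<phi>' x - m*x" and f''="\<lambda>x. \<phi>'' x - m"])
    show "convex {0<..<(1::real)}" by simp
  next
    fix z :: real assume z: "z \<in> {0<..<1}"
    show "((\<lambda>x. \<phi> x - m/2*x^2) has_real_derivative \<phi>' z - m*z) (at z)"
      using d1[OF z] by (auto intro!: derivative_eq_intros)
    show "((\<lambda>x. \<phi>' x - m*x) has_real_derivative \<phi>'' z - m) (at z)"
      using d2[OF z] by (auto intro!: derivative_eq_intros)
    show "0 \<le> \<phi>'' z - m" using lb[OF z] by simp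
  qed
  from convex_onD[OF this t x y]
  have "\<phi> ((1-t)*x+t*y) - m/2*((1-t)*x+t*y)^2 \<le> (1-t)*(\<phi> x - m/2*x^2) + t*(\<phi> y - m/2*y^2)"
    by simp
  moreover have "(1-t)*x^2 + t*y^2 - ((1-t)*x+t*y)^2 = t*(1-t)*(x-y)^2"
    by (simp add: power2_eq_square algebra_simps)
  moreover have "(1-t)*(\<phi> x - m/2*x^2) + t*(\<phi> y - m/2*y^2) = (1-t)*\<phi> x + t*\<phi> y - m/2*((1-t)*x^2 + t*y^2)"
    by (simp add: field_simps)
  moreover have "m/2*((1-t)*x^2 + t*y^2) = m/2*((1-t)*x+t*y)^2 + m/2*t*(1-t)*(x-y)^2"
    by (simp add: power2_eq_square field_simps)
  ultimately show ?thesis by linarith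
qed

lemma term_sc:
  fixes dd aa bb :: real
  assumes "dd > 0" "bb > 0" and m: "m \<le> 4*dd/bb"
    and x: "x \<in> {0<..<1}" and y: "y \<in> {0<..<1}" and t: "0 \<le> t" "t \<le> 1"
  shows "dd*((1-t)*x+t*y)*cost aa bb ((1-t)*x+t*y) \<le> (1-t)*(dd*x*cost aa bb x) + t*(dd*y*cost aa bb y) - m/2*t*(1-t)*(x-y)^2"
proof (rule sc1[where \<phi>="\<lambda>q. dd*q*cost aa bb q"
     and \<phi>'="\<lambda>q. dd*(cost aa bb q + (1/bb)*(q/(1-q) + 1))"
     and \<phi>''="\<lambda>q. (dd/bb)*(1/(1-q) + 1/q + 1/(1-q)^2)", OF _ _ _ x y t])
  fix z :: real assume z: "z \<in> {0<..<1}"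
  then have z0: "0 < z" "z < 1" by auto
  have dc: "(cost aa bb has_real_derivative (1/bb)*(1/(1-z) + 1/z)) (at z)"
    unfolding cost_def[abs_def] using z0 assms(2)
    by (auto intro!: derivative_eq_intros simp: field_simps)
  show "((\<lambda>q. dd*q*cost aa bb q) has_real_derivative dd*(cost aa bb z + (1/bb)*(z/(1-z) + 1))) (at z)"
    using z0 assms(2) by (auto intro!: derivative_eq_intros dc simp: field_simps)
  show "((\<lambda>q. dd*(cost aa bb q + (1/bb)*(q/(1-q) + 1))) has_real_derivative (dd/bb)*(1/(1-z) + 1/z + 1/(1-z)^2)) (at z)"
    using z0 assms(2) by (auto intro!: derivative_eq_intros dc simp: field_simps power2_eq_square)
  have "4 \<le> 1/(1-z) + 1/z"
  proof -
    have "1/(1-z) + 1/z = 1/(z*(1-z))" using z0 by (simp add: field_simps)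
    moreover have "z*(1-z) \<le> 1/4" 
    proof -
      have "0 \<le> (z - 1/2)^2" by simp
      also have "(z - 1/2)^2 = 1/4 - z*(1-z)" by (simp add: power2_eq_square field_simps)
      finally show ?thesis by simp
    qed
    moreover have "z*(1-z) > 0" using z0 by simp
    ultimately show ?thesis by (simp add: field_simps)
  qed
  then have "4 \<le> 1/(1-z) + 1/z + 1/(1-z)^2" using z0 by (simp add: add_increasing2)
  then have "(dd/bb)*4 \<le> (dd/bb)*(1/(1-z) + 1/z + 1/(1-z)^2)"
    using assms by (intro mult_left_mono) auto
  then show "m \<le> (dd/bb)*(1/(1-z) + 1/z + 1/(1-z)^2)" using m by (simp add: mult.commute)
qed

theorem theorem2:
  fixes D a b :: "'n::finite \<Rightarrow> real" and B :: real
  assumes "\<forall>i. D i > 0" and "\<forall>i. b i > 0"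
  shows "strongly_convex_on (open_unit_cube :: (real ^ 'n) set) (gfun D a b B)"
proof -
  define \<mu> where "\<mu> = Min (range (\<lambda>i. 4 * D i / b i))"
  have \<mu>pos: "\<mu> > 0" unfolding \<mu>_def using assms by (subst Min_gr_iff) auto
  have \<mu>le: "\<mu> \<le> 4 * D i / b i" for i unfolding \<mu>_def by (rule Min_le) auto
  have cvx: "convex (open_unit_cube :: (real ^ 'n) set)"
    unfolding open_unit_cube_def convex_def
  proof (intro allI impI ballI, clarify)
    fix x y :: "real^'n" and u v :: real and i
    assume h: "\<forall>i. 0 < x $ i \<and> x $ i < 1" "\<forall>i. 0 < y $ i \<and> y $ i < 1" "0 \<le> u" "0 \<le> v" "u + v = 1"
    have "0 < u * x $ i + v * y $ i"
    proof -
      have "u * x $ i \<ge> 0" "v * y $ i \<ge> 0" using h by (simp_all add: less_imp_le)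
      moreover have "u * x $ i > 0 \<or> v * y $ i > 0" using h by (cases "u = 0") auto
      ultimately show ?thesis by linarith
    qed
    moreover have "u * x $ i + v * y $ i < 1"
    proof -
      have "u * (1 - x $ i) \<ge> 0" "v * (1 - y $ i) \<ge> 0" using h by (simp_all add: less_imp_le)
      moreover have "u * (1 - x $ i) > 0 \<or> v * (1 - y $ i) > 0" using h
        by (cases "u = 0") auto
      ultimately show ?thesis using h unfolding right_diff_distrib mult_1_right by linarith
    qed
    ultimately show "0 < (u *\<^sub>R x + v *\<^sub>R y) $ i \<and> (u *\<^sub>R x + v *\<^sub>R y) $ i < 1" by simp
  qed
  show ?thesis unfolding strongly_convex_on_def
  proof (intro conjI cvx exI[of _ \<mu>] \<mu>pos ballI)
    fix x y :: "real^'n" and t :: real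
    assume x: "x \<in> open_unit_cube" and y: "y \<in> open_unit_cube" and t: "t \<in> {0..1}"
    have xi: "x $ i \<in> {0<..<1}" and yi: "y $ i \<in> {0<..<1}" for i
      using x y unfolding open_unit_cube_def by auto
    have each: "D i*((1-t)*x$i+t*y$i)*cost (a i) (b i) ((1-t)*x$i+t*y$i) \<le> (1-t)*(D i*x$i*cost (a i) (b i) (x$i)) + t*(D i*y$i*cost (a i) (b i) (y$i)) - \<mu>/2*t*(1-t)*(x$i-y$i)^2" for i
      using t assms by (intro term_sc[OF _ _ \<mu>le xi yi]) auto
    have nrm: "(norm (x - y))^2 = (\<Sum>i\<in>UNIV. (x$i - y$i)^2)"
      unfolding power2_norm_eq_inner inner_vec_def by (simp add: power2_eq_square)
    have "gfun D a b B ((1 - t) *\<^sub>R x + t *\<^sub>R y) = (\<Sum>i\<in>UNIV. D i*((1-t)*x$i+t*y$i)*cost (a i) (b i) ((1-t)*x$i+t*y$i)) - B"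
      by (simp add: gfun_def)
    also have "\<dots> \<le> (\<Sum>i\<in>UNIV. (1-t)*(D i*x$i*cost (a i) (b i) (x$i)) + t*(D i*y$i*cost (a i) (b i) (y$i)) - \<mu>/2*t*(1-t)*(x$i-y$i)^2) - B"
      by (intro diff_right_mono sum_mono each)
    also have "\<dots> = (1 - t) * gfun D a b B x + t * gfun D a b B y - \<mu> / 2 * t * (1 - t) * (norm (x - y))\<^sup>2"
      unfolding nrm gfun_def by (simp add: sum.distrib sum_subtractf sum_distrib_left algebra_simps)
    finally show "gfun D a b B ((1 - t) *\<^sub>R x + t *\<^sub>R y) \<le> (1 - t) * gfun D a b B x + t * gfun D a b B y - \<mu> / 2 * t * (1 - t) * (norm (x - y))\<^sup>2" .
  qed
qed

end
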